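(* Let $d\ge1$ and let $\Psi$, $B$, $b$ satisfy the standing assumptions (A1)–(A4) in the context, and for $h>0$ let $b_h(t,x)=\frac{b(t,x)}{1+h|b(t,x)|}$. Then there exists $h_{\max}>0$ such that $$\lim_{r\to\infty}\ \sup_{|x|\ge r,\ t\ge0,\ 0<h\le h_{\max}}\Big(2\Big\langle\frac{x}{|x|},b_h(t,x)\Big\rangle+\frac{h}{|x|}|b_h(t,x)|^2\Big)<0.$$
   Context: $|\cdot|$ is the Euclidean norm on vectors and the operator norm on matrices; $a\vee b=\max\{a,b\}$; $\operatorname{div}B$ is the row-wise divergence $(\operatorname{div}B)_i=\sum_j\partial_{x_j}B_{ij}$. Standing assumptions: (A1) $\Psi\in C^2(\mathbb{R}^d)$, $\nabla\Psi$ $L$-Lipschitz, $\nabla\Psi(0)=0$. (A2) $B:[0,\infty)\times\mathbb{R}^d\to\mathbb{R}^{d\times d}$ symmetric with $\beta_lI\preceq B(t,x)\preceq\beta_uI$, $\beta_l,\beta_u>0$. (A3) $B$ is $C^2$ in $x$ and there are $L,n_B>0$, $\delta\ge1/2$ with, for all $x,y$, $s,t>0$: $|B(t,x)-B(t,y)|\vee|\operatorname{div}B(t,x)-\operatorname{div}B(t,y)|\le L(1+|x|^{n_B}+|y|^{n_B})|x-y|$ and $|B(s,x)-B(t,x)|\vee|\operatorname{div}B(s,x)-\operatorname{div}B(t,x)|\le L(1+|x|^{n_B})|s-t|^\delta$. (A4) $b(t,x)=-B(t,x)\nabla\Psi(x)+\operatorname{div}B(t,x)$ satisfies $\lim_{r\to\infty}\sup_{|x|\ge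 r,t\ge0}\langle\frac{x}{|x|},\frac{b(t,x)}{|b(t,x)|}\rangle<0$ and $\lim_{r\to\infty}\inf_{|x|\ge r,t\ge0}|b(t,x)|=\infty$. *)

theory Defs
  imports "HOL-Analysis.Analysis"
begin

definition C1_map :: "('a::euclidean_space \<Rightarrow> 'b::real_normed_vector) \<Rightarrow> bool" where
  "C1_map f \<longleftrightarrow> (\<exists>f'. (\<forall>x. (f has_derivative blinfun_apply (f' x)) (at x)) \<and> continuous_on UNIV f')"

definition C2_map :: "('a::euclidean_space \<Rightarrow> 'b::real_normed_vector) \<Rightarrow> bool" where
  "C2_map f \<longleftrightarrow> (\<exists>f'. (\<forall>x. (f has_derivative blinfun_apply (f' x)) (at x)) \<and> C1_map f')"

definition grad :: "(real^'n \<Rightarrow> real) \<Rightarrow> real^'n \<Rightarrow> real^'n" where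
  "grad f x = (\<chi> i. frechet_derivative f (at x) (axis i 1))"

definition mdiv :: "(real^'n \<Rightarrow> real^'n^'n) \<Rightarrow> real^'n \<Rightarrow> real^'n" where
  "mdiv A x = (\<chi> i. \<Sum>j\<in>UNIV. frechet_derivative (\<lambda>y. A y $ i $ j) (at x) (axis j 1))"

definition opnorm :: "real^'n^'n \<Rightarrow> real" where
  "opnorm A = onorm (\<lambda>v. A *v v)"

definition drift :: "(real \<Rightarrow> real^'n \<Rightarrow> real^'n^'n) \<Rightarrow> (real^'n \<Rightarrow> real) \<Rightarrow> real \<Rightarrow> real^'n \<Rightarrow> real^'n" where
  "drift B Psi t x = - (B t x *v grad Psi x) + mdiv (B t) x"

definition tamed :: "real \<Rightarrow> (real \<Rightarrow> real^'n \<Rightarrow> real^'n) \<Rightarrow> real \<Rightarrow> real^'n \<Rightarrow> real^'n" where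
  "tamed h b t x = (1 / (1 + h * norm (b t x))) *\<^sub>R b t x"

end

theory Submission
  imports Defs
begin

lemma key_ineq:
  fixes ip n h \<rho> c :: real
  assumes "n > 1" "0 < h" "h \<le> 1" "c > 0" "\<rho> > 0" "1/\<rho> \<le> c" "ip / n < -c"
  shows "2 * (ip / (1 + h*n)) + h / \<rho> * (n / (1 + h*n))^2 \<le> -c/2"
proof -
  define sq where "sq = n / (1 + h*n)"
  have d: "1 + h*n > 0" using assms by (simp add: add_pos_pos)
  have ip: "ip < -c * n" using assms by (simp add: divide_less_eq)
  have s_pos: "sq > 0" unfolding sq_def using d assms by simp
  have hs: "h * sq < 1" unfolding sq_def using d by (simp add: divide_less_eq)
  have s_half: "sq \<ge> 1/2" unfolding sq_def using d assms
    by (simp add: divide_simps) (smt (verit) mult_left_le_one_le)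
  have t1: "2 * (ip / (1 + h*n)) \<le> - 2 * (c * sq)"
    unfolding sq_def using ip d by (simp add: divide_simps)
  have "h / \<rho> * sq^2 = sq * ((h * sq) * (1/\<rho>))" by (simp add: power2_eq_square)
  also have "\<dots> \<le> sq * c"
  proof (rule mult_left_mono)
    have "(h * sq) * (1/\<rho>) \<le> 1 * (1/\<rho>)" using hs assms by (intro mult_right_mono) auto
    then show "(h * sq) * (1/\<rho>) \<le> c" using assms by linarith
  qed (use s_pos in auto)
  finally have t2: "h / \<rho> * sq^2 \<le> c * sq" by (simp add: mult.commute)
  have "2 * (ip / (1 + h*n)) + h / \<rho> * sq^2 \<le> - (c * sq)" using t1 t2 by linarith
  also have "\<dots> \<le> -c/2" using s_half assms by (simp add: mult_left_mono)
  finally show ?thesis unfolding sq_def .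
qed

theorem lemma12:
  fixes Psi :: "real^'n \<Rightarrow> real"
    and B :: "real \<Rightarrow> real^'n \<Rightarrow> real^'n^'n"
    and L nB \<delta> \<beta>l \<beta>u :: real
  assumes A1_C2: "C2_map Psi"
    and A1_Lip: "\<forall>x y. norm (grad Psi x - grad Psi y) \<le> L * norm (x - y)"
    and A1_zero: "grad Psi 0 = 0"
    and A2_sym: "\<forall>t x. 0 \<le> t \<longrightarrow> transpose (B t x) = B t x"
    and A2_pos: "\<beta>l > 0" "\<beta>u > 0"
    and A2_bounds: "\<forall>t x v. 0 \<le> t \<longrightarrow>
        \<beta>l * (v \<bullet> v) \<le> v \<bullet> (B t x *v v) \<and> v \<bullet> (B t x *v v) \<le> \<beta>u * (v \<bullet> v)"
    and A3_C2: "\<forall>t. 0 \<le> t \<longrightarrow> C2_map (B t)"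
    and A3_const: "L > 0" "nB > 0" "\<delta> \<ge> 1/2"
    and A3_x: "\<forall>x y t. 0 < t \<longrightarrow>
        max (opnorm (B t x - B t y)) (norm (mdiv (B t) x - mdiv (B t) y))
          \<le> L * (1 + norm x powr nB + norm y powr nB) * norm (x - y)"
    and A3_t: "\<forall>x s t. 0 < s \<longrightarrow> 0 < t \<longrightarrow>
        max (opnorm (B s x - B t x)) (norm (mdiv (B s) x - mdiv (B t) x))
          \<le> L * (1 + norm x powr nB) * \<bar>s - t\<bar> powr \<delta>"
    and A4_dir: "\<exists>l::ereal. ((\<lambda>r. SUP (x, t)\<in>{(x, t). r \<le> norm x \<and> 0 \<le> t}.
        ereal ((1 / norm x) *\<^sub>R x \<bullet> (1 / norm (drift B Psi t x)) *\<^sub>R drift B Psi t x))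
          \<longlongrightarrow> l) at_top \<and> l < 0"
    and A4_grow: "((\<lambda>r. INF (x, t)\<in>{(x, t). r \<le> norm x \<and> 0 \<le> t}.
        ereal (norm (drift B Psi t x))) \<longlongrightarrow> \<infinity>) at_top"
  shows "\<exists>hmax > 0. \<exists>l::ereal.
    ((\<lambda>r. SUP (x, t, h)\<in>{(x, t, h). r \<le> norm x \<and> 0 \<le> t \<and> 0 < h \<and> h \<le> hmax}.
        ereal (2 * ((1 / norm x) *\<^sub>R x \<bullet> tamed h (drift B Psi) t x)
               + h / norm x * (norm (tamed h (drift B Psi) t x))^2))
      \<longlongrightarrow> l) at_top \<and> l < 0"
  proof -
  let ?g = "\<lambda>r::real. SUP (x, t)\<in>{(x::real^'n, t::real). r \<le> norm x \<and> 0 \<le> t}.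
        ereal ((1 / norm x) *\<^sub>R x \<bullet> (1 / norm (drift B Psi t x)) *\<^sub>R drift B Psi t x)"
  let ?G = "\<lambda>r::real. INF (x, t)\<in>{(x::real^'n, t::real). r \<le> norm x \<and> 0 \<le> t}. ereal (norm (drift B Psi t x))"
  define F where "F = (\<lambda>r::real. SUP (x, t, h)\<in>{(x::real^'n, t::real, h). r \<le> norm x \<and> 0 \<le> t \<and> 0 < h \<and> h \<le> (1::real)}.
        ereal (2 * ((1 / norm x) *\<^sub>R x \<bullet> tamed h (drift B Psi) t x)
               + h / norm x * (norm (tamed h (drift B Psi) t x))^2))"
  obtain l where l: "(?g \<longlongrightarrow> l) at_top" "l < 0" using A4_dir by blast
  obtain q :: real where q: "l < ereal q" "ereal q < 0" using ereal_dense2[OF l(2)] by blast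
  have ev1: "eventually (\<lambda>r. ?g r < ereal q) at_top" using order_tendstoD(2)[OF l(1) q(1)] .
  have ev2: "eventually (\<lambda>r. ereal 1 < ?G r) at_top"
    using order_tendstoD(1)[OF A4_grow] by simp
  obtain R where R: "\<And>r. r \<ge> R \<Longrightarrow> ?g r < ereal q \<and> ereal 1 < ?G r"
    using eventually_conj[OF ev1 ev2] unfolding eventually_at_top_linorder by blast
  define c where "c = - q"
  have c: "c > 0" using q(2) unfolding c_def by simp
  define r0 where "r0 = max R (max 1 (1/c))"
  have bound: "F r0 \<le> ereal (-c/2)"
    unfolding F_def
  proof (rule SUP_least)
    fix p :: "(real^'n) \<times> real \<times> real" assume "p \<in> {(x, t, h). r0 \<le> norm x \<and> 0 \<le> t \<and> 0 < h \<and> h \<le> (1::real)}"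
    then obtain x t h where p: "p = (x, t, h)" "r0 \<le> norm x" "0 \<le> t" "0 < h" "h \<le> 1" by auto
    define bv where "bv = drift B Psi t x"
    define u where "u = (1 / norm x) *\<^sub>R x"
    have xR: "R \<le> norm x" and x1: "1 \<le> norm x" and xc: "1/c \<le> norm x"
      using p(2) unfolding r0_def by auto
    have mem: "(x, t) \<in> {(x, t). R \<le> norm x \<and> 0 \<le> t}" using xR p(3) by auto
    have "ereal (u \<bullet> (1 / norm bv) *\<^sub>R bv) \<le> ?g R"
      unfolding u_def bv_def by (rule SUP_upper2[OF mem]) simp
    also have "\<dots> < ereal q" using R by blast
    finally have a: "u \<bullet> (1 / norm bv) *\<^sub>R bv < q" by simp
    have "ereal 1 < ?G R" using R by blast
    also have "\<dots> \<le> ereal (norm bv)"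
      unfolding bv_def by (rule INF_lower2[OF mem]) simp
    finally have n1: "norm bv > 1" by simp
    have rho: "norm x > 0" using x1 by linarith
    have rc: "1 / norm x \<le> c"
      using xc c rho by (simp add: divide_simps mult.commute)
    have ipn: "(u \<bullet> bv) / norm bv < - c" using a unfolding c_def by (simp add: inner_scaleR_right)
    have k: "2 * ((u \<bullet> bv) / (1 + h * norm bv)) + h / norm x * (norm bv / (1 + h * norm bv))^2 \<le> -c/2"
      by (rule key_ineq[OF n1 p(4) p(5) c rho rc ipn])
    have pos: "1 + h * norm bv > 0" using p(4) by (simp add: add_pos_nonneg)
    have e1: "u \<bullet> tamed h (drift B Psi) t x = (u \<bullet> bv) / (1 + h * norm bv)"
      unfolding tamed_def bv_def by (simp add: inner_scaleR_right)
    have e2: "norm (tamed h (drift B Psi) t x) = norm bv / (1 + h * norm bv)"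
      unfolding tamed_def bv_def using pos by (simp add: bv_def)
    show "(case p of (x, t, h) \<Rightarrow> ereal (2 * ((1 / norm x) *\<^sub>R x \<bullet> tamed h (drift B Psi) t x)
               + h / norm x * (norm (tamed h (drift B Psi) t x))^2)) \<le> ereal (-c/2)"
    proof -
      have E: "(1 / norm x) *\<^sub>R x \<bullet> tamed h (drift B Psi) t x = (u \<bullet> bv) / (1 + h * norm bv)"
        using e1 unfolding u_def .
      have "2 * ((1 / norm x) *\<^sub>R x \<bullet> tamed h (drift B Psi) t x)
               + h / norm x * (norm (tamed h (drift B Psi) t x))^2 \<le> -c/2"
        unfolding E e2 by (rule k)
      then show ?thesis unfolding p(1) by simp
    qed
  qed
  have anti: "F r' \<le> F r" if "r \<le> r'" for r r'
    unfolding F_def by (rule SUP_subset_mono) (use that in auto)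
  define l' where "l' = (INF r. F r)"
  have lim: "(F \<longlongrightarrow> l') at_top"
  proof (rule order_tendstoI)
    fix a assume "a < l'"
    show "eventually (\<lambda>r. a < F r) at_top"
    proof (rule always_eventually, rule allI)
      fix r
      have "l' \<le> F r" unfolding l'_def by (rule INF_lower) simp
      then show "a < F r" using \<open>a < l'\<close> by (rule order_less_le_trans[rotated])
    qed
  next
    fix a assume "l' < a"
    then obtain r1 where r1: "F r1 < a" unfolding l'_def by (auto simp: INF_less_iff)
    show "eventually (\<lambda>r. F r < a) at_top"
      unfolding eventually_at_top_linorder
      by (rule exI[of _ r1]) (auto intro: order_le_less_trans[OF anti r1])
  qed
  have "l' \<le> F r0" unfolding l'_def by (rule INF_lower) simp
  also have "\<dots> \<le> ereal (-c/2)" by (rule bound)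
  also have "\<dots> < 0" using c by simp
  finally have "l' < 0" .
  then show ?thesis using lim unfolding F_def by (intro exI[of _ "1::real"]) auto
qed

end
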